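(* Let $G$ be a group, $\mathcal F\subset\mathcal P_G$ a left-invariant lower family, $A\subset G$, and $\alpha$ an ordinal. Then $A\in\tau^\alpha(\mathcal F)$ if and only if the $\tau$-tree $T_A$ is well-founded and $\mathrm{rank}(T_A)\le\alpha$ when $\alpha<\omega$, respectively $\mathrm{rank}(T_A)\le\alpha+1$ when $\alpha\ge\omega$.
   Context: $e$ is the neutral element of $G$, $G_\circ=G\setminus\{e\}$. $G_\circ^{<\omega}=\bigcup_{n\in\omega}G_\circ^n$ is the tree of finite sequences, ordered by $s\le t$ iff $s$ is an initial segment of $t$; for $s\in G_\circ^{<\omega}$ and $x\in G_\circ$, $s\hat{\ }x$ is the sequence $s$ extended by $x$. For $A\subset G$ define $A_\emptyset=A$ and $A_{s\hat{\ }x}=A_s\cap xA_s$; thus $A_{(g_0,\dots,g_n)}=\bigcap_{k_0,\dots,k_n\in\{0,1\}}g_n^{k_n}\cdots g_0^{k_0}A$. The $\tau$-tree of $A$ is $T_A=\{s\in G_\circ^{<\omega}: A_s\notin\mathcal F\}$ (a lower subtree). A poset $X$ is well-founded if every nonempty subset has a maximal element; then $\mathrm{rank}_X(x)=\sup\{\mathrm{rank}_X(y)+1: y>x\}$ ($\sup\emptyset=0$), and $\mathrm{rank}(X)=\sup\{\mathrm{rank}_X(x)+1:x\in X\}$ for $X\neq\emptyset$, $\mathrm{rank}(\emptyset)=0$. For a left-invariant lower $\mathcal F$ ($xF\in\mathcal F$ for $F\in\mathcal F$, $x\in G$; closed under subsets): $\tau(\mathcal F)=\{A: xA\cap yA\in\mathcal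 F$ for all distinct $x,y\in G\}$, $\tau^0(\mathcal F)=\mathcal F$, $\tau^{<\alpha}(\mathcal F)=\bigcup_{\beta<\alpha}\tau^\beta(\mathcal F)$, $\tau^\alpha(\mathcal F)=\tau(\tau^{<\alpha}(\mathcal F))$ for $\alpha>0$. *)

theory Defs
  imports "HOL-Algebra.Coset" "HOL-Library.Sublist"
begin

definition left_inv_lower :: "('g, 'b) monoid_scheme \<Rightarrow> 'g set set \<Rightarrow> bool" where
  "left_inv_lower G \<F> \<longleftrightarrow>
     \<F> \<subseteq> Pow (carrier G)
   \<and> (\<forall>X\<in>\<F>. \<forall>x\<in>carrier G. x <#\<^bsub>G\<^esub> X \<in> \<F>)
   \<and> (\<forall>X\<in>\<F>. \<forall>Y. Y \<subseteq> X \<longrightarrow> Y \<in> \<F>)"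

definition tau :: "('g, 'b) monoid_scheme \<Rightarrow> 'g set set \<Rightarrow> 'g set set" where
  "tau G \<F> = {A. A \<subseteq> carrier G \<and>
     (\<forall>x\<in>carrier G. \<forall>y\<in>carrier G. x \<noteq> y \<longrightarrow> (x <#\<^bsub>G\<^esub> A) \<inter> (y <#\<^bsub>G\<^esub> A) \<in> \<F>)}"

text \<open>Transfinite iterates: ordinals are represented by elements of an arbitrary
  well-ordered type; tau^0 = F, tau^alpha = tau(union of tau^beta, beta < alpha).\<close>
definition tau_iter :: "('g, 'b) monoid_scheme \<Rightarrow> 'g set set \<Rightarrow> 'o::wellorder \<Rightarrow> 'g set set" where
  "tau_iter G \<F> = wfrec {(b, a). b < a}
     (\<lambda>rec a. if (\<forall>b. \<not> b < a) then \<F> else tau G (\<Union>b\<in>{b. b < a}. rec b))"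

definition shift_set :: "('g, 'b) monoid_scheme \<Rightarrow> 'g set \<Rightarrow> 'g list \<Rightarrow> 'g set" where
  "shift_set G A s = fold (\<lambda>x B. B \<inter> (x <#\<^bsub>G\<^esub> B)) s A"

definition tau_tree :: "('g, 'b) monoid_scheme \<Rightarrow> 'g set set \<Rightarrow> 'g set \<Rightarrow> 'g list set" where
  "tau_tree G \<F> A = {s. set s \<subseteq> carrier G - {\<one>\<^bsub>G\<^esub>} \<and> shift_set G A s \<notin> \<F>}"

definition wf_poset :: "'a list set \<Rightarrow> bool" where
  "wf_poset T \<longleftrightarrow> (\<forall>S\<subseteq>T. S \<noteq> {} \<longrightarrow> (\<exists>m\<in>S. \<forall>t\<in>S. \<not> strict_prefix m t))"

text \<open>r is the rank function of T with values in the well-order 'o: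
  r s = sup { r t + 1 : t > s } (the least gamma with r t < gamma for all t > s).\<close>
definition is_rank_fn :: "'a list set \<Rightarrow> ('a list \<Rightarrow> 'o::wellorder) \<Rightarrow> bool" where
  "is_rank_fn T r \<longleftrightarrow> (\<forall>s\<in>T.
      (\<forall>t\<in>T. strict_prefix s t \<longrightarrow> r t < r s)
    \<and> (\<forall>\<gamma>. (\<forall>t\<in>T. strict_prefix s t \<longrightarrow> r t < \<gamma>) \<longrightarrow> r s \<le> \<gamma>))"

text \<open>rank(T) \<le> alpha, i.e. sup {rank(s)+1 : s in T} \<le> alpha, i.e. all node ranks < alpha.\<close>
definition tree_rank_le :: "'a list set \<Rightarrow> 'o::wellorder \<Rightarrow> bool" where
  "tree_rank_le T \<alpha> \<longleftrightarrow> (\<exists>r::'a list \<Rightarrow> 'o. is_rank_fn T r \<and> (\<forall>s\<in>T. r s < \<alpha>))"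

text \<open>rank(T) \<le> alpha + 1, i.e. all node ranks \<le> alpha.\<close>
definition tree_rank_le_succ :: "'a list set \<Rightarrow> 'o::wellorder \<Rightarrow> bool" where
  "tree_rank_le_succ T \<alpha> \<longleftrightarrow> (\<exists>r::'a list \<Rightarrow> 'o. is_rank_fn T r \<and> (\<forall>s\<in>T. r s \<le> \<alpha>))"

text \<open>alpha < omega iff alpha is a finite ordinal.\<close>
definition finite_ord :: "'o::wellorder \<Rightarrow> bool" where
  "finite_ord \<alpha> \<longleftrightarrow> finite {..<\<alpha>}"

end

theory Submission
  imports Defs
begin

definition bnd :: "'o::wellorder \<Rightarrow> 'o \<Rightarrow> bool" where
  "bnd \<alpha> \<gamma> \<longleftrightarrow> (if finite_ord \<alpha> then \<gamma> < \<alpha> else \<gamma> \<le> \<alpha>)"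

definition dec :: "'a list set \<Rightarrow> ('a list \<Rightarrow> 'o::wellorder) \<Rightarrow> bool" where
  "dec T d \<longleftrightarrow> (\<forall>s\<in>T. \<forall>t\<in>T. strict_prefix s t \<longrightarrow> d t < d s)"

definition Nt :: "'a list set \<Rightarrow> 'o::wellorder \<Rightarrow> bool" where
  "Nt T \<alpha> \<longleftrightarrow> (\<exists>d. dec T d \<and> (\<forall>s\<in>T. bnd \<alpha> (d s)))"

lemma fo_mono: "finite_ord (\<alpha>::'o::wellorder) \<Longrightarrow> \<beta> \<le> \<alpha> \<Longrightarrow> finite_ord \<beta>"
  unfolding finite_ord_def by (rule finite_subset[of _ "{..<\<alpha>}"]) auto

lemma bnd_le: "bnd \<beta> \<gamma> \<Longrightarrow> \<gamma> \<le> (\<beta>::'o::wellorder)"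
  unfolding bnd_def by (auto split: if_splits)

lemma bnd_down: "bnd \<alpha> \<delta> \<Longrightarrow> \<gamma> \<le> \<delta> \<Longrightarrow> bnd (\<alpha>::'o::wellorder) \<gamma>"
  unfolding bnd_def by (auto split: if_splits)

lemma L1:
  fixes m :: "'o::wellorder"
  assumes "m < \<delta>" "bnd \<alpha> \<delta>"
  shows "\<exists>\<beta><\<alpha>. bnd \<beta> m"
proof (cases "finite_ord m")
  case False
  have "m < \<alpha>" using assms bnd_le[OF assms(2)] by auto
  moreover have "bnd m m" using False by (simp add: bnd_def)
  ultimately show ?thesis by blast
next
  case True
  define s where "s = (LEAST x. m < x)"
  have ms: "m < s" unfolding s_def by (rule LeastI[of _ \<delta>]) (rule assms(1))
  have sd: "s \<le> \<delta>" unfolding s_def by (rule Least_le) (rule assms(1))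
  have eq: "{..<s} = insert m {..<m}"
  proof
    show "{..<s} \<subseteq> insert m {..<m}"
    proof
      fix x assume "x \<in> {..<s}"
      hence "x < s" by simp
      have "\<not> m < x"
      proof
        assume "m < x" hence "s \<le> x" unfolding s_def by (rule Least_le)
        with \<open>x < s\<close> show False by simp
      qed
      thus "x \<in> insert m {..<m}" by auto
    qed
  next
    show "insert m {..<m} \<subseteq> {..<s}" using ms by auto
  qed
  have fs: "finite_ord s" using True unfolding finite_ord_def eq by simp
  have "bnd s m" using fs ms by (simp add: bnd_def)
  moreover have "s < \<alpha>"
  proof (cases "finite_ord \<alpha>")
    case True thus ?thesis using assms(2) sd by (auto simp: bnd_def)
  next
    case False
    hence "\<delta> \<le> \<alpha>" using assms(2) by (simp add: bnd_def)
    hence "s \<le> \<alpha>" using sd by simp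
    moreover have "s \<noteq> \<alpha>" using fs False by auto
    ultimately show ?thesis by simp
  qed
  ultimately show ?thesis by blast
qed

lemma L2:
  fixes \<alpha> :: "'o::wellorder"
  assumes "\<exists>b. b < \<alpha>"
  shows "\<exists>\<delta>. bnd \<alpha> \<delta> \<and> (\<forall>\<beta><\<alpha>. \<forall>\<gamma>. bnd \<beta> \<gamma> \<longrightarrow> \<gamma> < \<delta>)"
proof (cases "finite_ord \<alpha>")
  case True
  define \<delta> where "\<delta> = Max {..<\<alpha>}"
  have fin: "finite {..<\<alpha>}" using True by (simp add: finite_ord_def)
  have ne: "{..<\<alpha>} \<noteq> {}" using assms by auto
  have "\<delta> \<in> {..<\<alpha>}" unfolding \<delta>_def using fin ne by (rule Max_in)
  hence "bnd \<alpha> \<delta>" using True by (simp add: bnd_def)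
  moreover have "\<forall>\<beta><\<alpha>. \<forall>\<gamma>. bnd \<beta> \<gamma> \<longrightarrow> \<gamma> < \<delta>"
  proof (intro allI impI)
    fix \<beta> \<gamma> assume b: "\<beta> < \<alpha>" and g: "bnd \<beta> \<gamma>"
    have "finite_ord \<beta>" using fo_mono[OF True less_imp_le[OF b]] .
    hence "\<gamma> < \<beta>" using g by (simp add: bnd_def)
    moreover have "\<beta> \<le> \<delta>" unfolding \<delta>_def using fin b by (simp add: Max_ge)
    ultimately show "\<gamma> < \<delta>" by simp
  qed
  ultimately show ?thesis by blast
next
  case False
  have "bnd \<alpha> \<alpha>" using False by (simp add: bnd_def)
  moreover have "\<forall>\<beta><\<alpha>. \<forall>\<gamma>. bnd \<beta> \<gamma> \<longrightarrow> \<gamma> < \<alpha>"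
    using bnd_le by (metis le_less_trans)
  ultimately show ?thesis by blast
qed

lemma dec_wf:
  fixes d :: "'a list \<Rightarrow> 'o::wellorder"
  assumes dT: "dec T d" shows "wf_poset T"
  unfolding wf_poset_def
proof (intro allI impI)
  fix S assume S: "S \<subseteq> T" "S \<noteq> {}"
  define g where "g = (LEAST g. \<exists>x\<in>S. d x = g)"
  from S obtain x0 where x0: "x0 \<in> S" by auto
  have "\<exists>x\<in>S. d x = g" unfolding g_def by (rule LeastI[of _ "d x0"]) (use x0 in auto)
  then obtain m where m: "m \<in> S" "d m = g" by auto
  have "\<forall>t\<in>S. \<not> strict_prefix m t"
  proof (intro ballI notI)
    fix t assume t: "t \<in> S" "strict_prefix m t"
    have "d t < d m" using dT S t m unfolding dec_def by blast
    moreover have "g \<le> d t" unfolding g_def by (rule Least_le) (use t in auto)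
    ultimately show False using m by simp
  qed
  with m show "\<exists>m\<in>S. \<forall>t\<in>S. \<not> strict_prefix m t" by blast
qed

lemma rank_iff_Nt:
  fixes T :: "'a list set" and \<alpha> :: "'o::wellorder"
  shows "(wf_poset T \<and> (if finite_ord \<alpha> then tree_rank_le T \<alpha> else tree_rank_le_succ T \<alpha>))
          \<longleftrightarrow> Nt T \<alpha>"
proof
  assume H: "wf_poset T \<and> (if finite_ord \<alpha> then tree_rank_le T \<alpha> else tree_rank_le_succ T \<alpha>)"
  have "\<exists>r::'a list \<Rightarrow> 'o. is_rank_fn T r \<and> (\<forall>s\<in>T. bnd \<alpha> (r s))"
  proof (cases "finite_ord \<alpha>")
    case True with H show ?thesis by (simp add: tree_rank_le_def bnd_def)
  next
    case False with H show ?thesis by (simp add: tree_rank_le_succ_def bnd_def)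
  qed
  then obtain r :: "'a list \<Rightarrow> 'o" where r: "is_rank_fn T r" "\<forall>s\<in>T. bnd \<alpha> (r s)" by blast
  have "dec T r" using r(1) unfolding is_rank_fn_def dec_def by blast
  with r(2) show "Nt T \<alpha>" unfolding Nt_def by blast
next
  assume "Nt T \<alpha>"
  then obtain d0 :: "'a list \<Rightarrow> 'o" where d0: "dec T d0" "\<forall>s\<in>T. bnd \<alpha> (d0 s)"
    unfolding Nt_def by blast
  define C where "C = {d::'a list \<Rightarrow> 'o. dec T d \<and> (\<forall>u\<in>T. bnd \<alpha> (d u))}"
  define r where "r s = (LEAST \<gamma>. \<exists>d\<in>C. d s = \<gamma>)" for s
  have d0C: "d0 \<in> C" using d0 by (simp add: C_def)
  have rC: "\<exists>d\<in>C. d s = r s" for s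
    unfolding r_def by (rule LeastI[of _ "d0 s"]) (use d0C in blast)
  have rle: "d \<in> C \<Longrightarrow> r s \<le> d s" for d s
    unfolding r_def by (rule Least_le) blast
  have rbnd: "s \<in> T \<Longrightarrow> bnd \<alpha> (r s)" for s
    using bnd_down[of \<alpha> "d0 s" "r s"] d0 rle[OF d0C] by blast
  have rdec: "s \<in> T \<Longrightarrow> t \<in> T \<Longrightarrow> strict_prefix s t \<Longrightarrow> r t < r s" for s t
  proof -
    assume st: "s \<in> T" "t \<in> T" "strict_prefix s t"
    obtain d where d: "d \<in> C" "d s = r s" using rC by blast
    have "r t \<le> d t" using rle[OF d(1)] .
    also have "d t < d s" using d(1) st unfolding C_def dec_def by blast
    finally show "r t < r s" using d(2) by simp
  qed
  have exact: "r s \<le> \<gamma>" if s: "s \<in> T" and g: "\<forall>t\<in>T. strict_prefix s t \<longrightarrow> r t < \<gamma>" for s \<gamma>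
  proof (rule ccontr)
    assume "\<not> r s \<le> \<gamma>"
    hence lt: "\<gamma> < r s" by simp
    define d' where "d' = r(s := \<gamma>)"
    have "dec T d'" unfolding dec_def
    proof (intro ballI impI)
      fix u v assume uv: "u \<in> T" "v \<in> T" "strict_prefix u v"
      show "d' v < d' u"
      proof (cases "u = s")
        case True
        hence "v \<noteq> s" using uv(3) by auto
        thus ?thesis using True g uv by (simp add: d'_def)
      next
        case False
        show ?thesis
        proof (cases "v = s")
          case True
          have "r s < r u" using rdec[OF uv] True by simp
          thus ?thesis using True False lt by (simp add: d'_def)
        next
          case False2: False
          thus ?thesis using False rdec[OF uv] by (simp add: d'_def)
        qed
      qed
    qed
    moreover have "\<forall>u\<in>T. bnd \<alpha> (d' u)"
      using rbnd bnd_down[OF rbnd[OF s] less_imp_le[OF lt]] by (simp add: d'_def)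
    ultimately have "d' \<in> C" by (simp add: C_def)
    hence "r s \<le> d' s" by (rule rle)
    thus False using lt by (simp add: d'_def)
  qed
  have "is_rank_fn T r" unfolding is_rank_fn_def using rdec exact by blast
  moreover have "wf_poset T" using dec_wf[OF d0(1)] .
  ultimately show "wf_poset T \<and> (if finite_ord \<alpha> then tree_rank_le T \<alpha> else tree_rank_le_succ T \<alpha>)"
    using rbnd by (auto simp: tree_rank_le_def tree_rank_le_succ_def bnd_def)
qed


lemma tree_step:
  fixes T :: "'a list set" and \<alpha> :: "'o::wellorder"
  assumes H1: "\<And>x s. x#s \<in> T \<Longrightarrow> x \<in> C"
      and H2: "\<And>s t. t \<in> T \<Longrightarrow> prefix s t \<Longrightarrow> s \<in> T"
      and pos: "\<exists>b. b < \<alpha>"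
  shows "(\<forall>z\<in>C. \<exists>\<beta><\<alpha>. Nt {s. z#s \<in> T} \<beta>) \<longleftrightarrow> Nt T \<alpha>"
proof
  assume "\<forall>z\<in>C. \<exists>\<beta><\<alpha>. Nt {s. z#s \<in> T} \<beta>"
  hence "\<forall>z\<in>C. \<exists>\<beta><\<alpha>. \<exists>d::'a list \<Rightarrow> 'o. dec {s. z#s \<in> T} d \<and> (\<forall>s\<in>{s. z#s \<in> T}. bnd \<beta> (d s))"
    unfolding Nt_def by blast
  then obtain B D where BD: "\<And>z. z \<in> C \<Longrightarrow> B z < \<alpha> \<and> dec {s. z#s \<in> T} (D z :: 'a list \<Rightarrow> 'o)
       \<and> (\<forall>s\<in>{s. z#s \<in> T}. bnd (B z) (D z s))"
    by metis
  obtain \<delta> where del: "bnd \<alpha> \<delta>" "\<And>\<beta> \<gamma>. \<beta> < \<alpha> \<Longrightarrow> bnd \<beta> \<gamma> \<Longrightarrow> \<gamma> < \<delta>"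
    using L2[OF pos] by blast
  define d where "d s = (case s of [] \<Rightarrow> \<delta> | z#s' \<Rightarrow> D z s')" for s
  have below: "z#s' \<in> T \<Longrightarrow> d (z#s') < \<delta>" for z s'
  proof -
    assume zs: "z#s' \<in> T"
    have z: "z \<in> C" using H1[OF zs] .
    show ?thesis using del(2)[of "B z" "D z s'"] BD[OF z] zs by (simp add: d_def)
  qed
  have "dec T d" unfolding dec_def
  proof (intro ballI impI)
    fix s t assume st: "s \<in> T" "t \<in> T" "strict_prefix s t"
    show "d t < d s"
    proof (cases t)
      case Nil thus ?thesis using st by simp
    next
      case (Cons z t')
      show ?thesis
      proof (cases s)
        case Nil thus ?thesis using below st Cons by (simp add: d_def)
      next
        case (Cons y s')
        have yz: "y = z" "strict_prefix s' t'" using st \<open>t = z#t'\<close> Cons by auto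
        have z: "z \<in> C" using H1 st \<open>t = z#t'\<close> by blast
        have "D z t' < D z s'" using BD[OF z] st \<open>t = z#t'\<close> Cons yz unfolding dec_def by auto
        thus ?thesis using \<open>t = z#t'\<close> Cons yz by (simp add: d_def)
      qed
    qed
  qed
  moreover have "\<forall>s\<in>T. bnd \<alpha> (d s)"
  proof
    fix s assume s: "s \<in> T"
    show "bnd \<alpha> (d s)"
    proof (cases s)
      case Nil thus ?thesis using del(1) by (simp add: d_def)
    next
      case (Cons z s')
      thus ?thesis using below[of z s'] s bnd_down[OF del(1)] less_imp_le by blast
    qed
  qed
  ultimately show "Nt T \<alpha>" unfolding Nt_def by blast
next
  assume "Nt T \<alpha>"
  then obtain d :: "'a list \<Rightarrow> 'o" where d: "dec T d" "\<forall>s\<in>T. bnd \<alpha> (d s)"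
    unfolding Nt_def by blast
  show "\<forall>z\<in>C. \<exists>\<beta><\<alpha>. Nt {s. z#s \<in> T} \<beta>"
  proof
    fix z assume "z \<in> C"
    show "\<exists>\<beta><\<alpha>. Nt {s. z#s \<in> T} \<beta>"
    proof (cases "{s. z#s \<in> T} = {}")
      case True
      obtain b where "b < \<alpha>" using pos by blast
      moreover have "Nt {s. z#s \<in> T} b" unfolding True Nt_def dec_def by simp
      ultimately show ?thesis by blast
    next
      case False
      then obtain s0 where s0: "z#s0 \<in> T" by auto
      have zT: "[z] \<in> T" using H2[OF s0] by simp
      have nT: "[] \<in> T" using H2[OF s0] by simp
      have mlt: "d [z] < d []" using d(1) zT nT unfolding dec_def by simp
      obtain \<beta> where b: "\<beta> < \<alpha>" "bnd \<beta> (d [z])"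
        using L1[OF mlt] d(2) nT by blast
      have "dec {s. z#s \<in> T} (\<lambda>s. d (z#s))" using d(1) unfolding dec_def by simp
      moreover have "\<forall>s\<in>{s. z#s \<in> T}. bnd \<beta> (d (z#s))"
      proof
        fix s assume s: "s \<in> {s. z#s \<in> T}"
        have "d (z#s) \<le> d [z]"
        proof (cases s)
          case Nil thus ?thesis by simp
        next
          case (Cons a b)
          thus ?thesis using d(1) zT s unfolding dec_def by (simp add: less_imp_le)
        qed
        thus "bnd \<beta> (d (z#s))" using bnd_down[OF b(2)] by blast
      qed
      ultimately have "Nt {s. z#s \<in> T} \<beta>" unfolding Nt_def by blast
      with b show ?thesis by blast
    qed
  qed
qed


lemma tau_iter_unfold:
  "tau_iter G F \<alpha> = (if (\<forall>b. \<not> b < \<alpha>) then F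
       else tau G (\<Union>b\<in>{b. b < (\<alpha>::'o::wellorder)}. tau_iter G F b))"
proof -
  have wf: "wf {(b, a). b < (a::'o)}" by (rule wf)
  show ?thesis
    unfolding tau_iter_def
    apply (subst wfrec[OF wf])
    apply (simp add: cut_apply)
    done
qed

lemma tau_iter_pos:
  "\<exists>b. b < \<alpha> \<Longrightarrow> tau_iter G F \<alpha> = tau G (\<Union>b\<in>{b. b < (\<alpha>::'o::wellorder)}. tau_iter G F b)"
  by (subst tau_iter_unfold) auto

lemma tau_iter_zero:
  "\<forall>b. \<not> b < (\<alpha>::'o::wellorder) \<Longrightarrow> tau_iter G F \<alpha> = F"
  by (subst tau_iter_unfold) auto

lemma shift_Cons: "shift_set G A (z#s) = shift_set G (A \<inter> (z <#\<^bsub>G\<^esub> A)) s"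
  by (simp add: shift_set_def)

lemma shift_sub: "shift_set G A s \<subseteq> A"
proof (induction s arbitrary: A)
  case Nil thus ?case by (simp add: shift_set_def)
next
  case (Cons z s)
  thus ?case using Cons.IH[of "A \<inter> (z <#\<^bsub>G\<^esub> A)"] by (simp add: shift_Cons)
qed

lemma shift_append: "shift_set G A (s@u) = shift_set G (shift_set G A s) u"
  by (simp add: shift_set_def)

lemma tree_prefix:
  assumes F: "left_inv_lower G F" and t: "t \<in> tau_tree G F A" and p: "prefix s t"
  shows "s \<in> tau_tree G F A"
proof -
  obtain u where u: "t = s @ u" using p by (auto simp: prefix_def)
  have "shift_set G A t \<subseteq> shift_set G A s" using u shift_sub by (simp add: shift_append)
  moreover have "shift_set G A t \<notin> F" "set t \<subseteq> carrier G - {\<one>\<^bsub>G\<^esub>}" using t by (auto simp: tau_tree_def)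
  ultimately show ?thesis using F u unfolding tau_tree_def left_inv_lower_def by auto
qed

lemma tree_Cons: "x#s \<in> tau_tree G F A \<Longrightarrow> x \<in> carrier G - {\<one>\<^bsub>G\<^esub>}"
  by (simp add: tau_tree_def)

lemma tree_sub:
  "z \<in> carrier G - {\<one>\<^bsub>G\<^esub>} \<Longrightarrow>
   tau_tree G F (A \<inter> (z <#\<^bsub>G\<^esub> A)) = {s. z#s \<in> tau_tree G F A}"
  by (auto simp: tau_tree_def shift_Cons)

lemma lil_Union:
  "(\<And>i. i \<in> I \<Longrightarrow> left_inv_lower G (H i)) \<Longrightarrow> left_inv_lower G (\<Union>i\<in>I. H i)"
  unfolding left_inv_lower_def by blast

context group
begin

lemma lcos_Int:
  assumes x: "x \<in> carrier G" and B: "B \<subseteq> carrier G" and C: "C \<subseteq> carrier G"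
  shows "x <# (B \<inter> C) = (x <# B) \<inter> (x <# C)"
proof
  show "x <# (B \<inter> C) \<subseteq> (x <# B) \<inter> (x <# C)" unfolding l_coset_def by blast
  show "(x <# B) \<inter> (x <# C) \<subseteq> x <# (B \<inter> C)"
  proof
    fix w assume "w \<in> (x <# B) \<inter> (x <# C)"
    then obtain b c where bc: "b \<in> B" "c \<in> C" "w = x \<otimes> b" "w = x \<otimes> c"
      unfolding l_coset_def by blast
    have xu: "x \<in> Units G" using x by (simp add: Units_eq)
    have "b = c" using bc B C Units_l_cancel[OF xu, of b c] by blast
    thus "w \<in> x <# (B \<inter> C)" using bc unfolding l_coset_def by blast
  qed
qed

lemma lcos_mono: "B \<subseteq> C \<Longrightarrow> x <# B \<subseteq> x <# C"
  unfolding l_coset_def by auto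

lemma lcos_sub: "x \<in> carrier G \<Longrightarrow> B \<subseteq> carrier G \<Longrightarrow> x <# B \<subseteq> carrier G"
  unfolding l_coset_def by auto

lemma tau_char:
  assumes H: "left_inv_lower G H" and A: "A \<subseteq> carrier G"
  shows "A \<in> tau G H \<longleftrightarrow> (\<forall>z\<in>carrier G - {\<one>}. A \<inter> (z <# A) \<in> H)"
proof
  assume "A \<in> tau G H"
  show "\<forall>z\<in>carrier G - {\<one>}. A \<inter> (z <# A) \<in> H"
  proof
    fix z assume z: "z \<in> carrier G - {\<one>}"
    have "(\<one> <# A) \<inter> (z <# A) \<in> H" using \<open>A \<in> tau G H\<close> z unfolding tau_def by auto
    thus "A \<inter> (z <# A) \<in> H" using lcos_mult_one[OF A] by simp
  qed
next
  assume R: "\<forall>z\<in>carrier G - {\<one>}. A \<inter> (z <# A) \<in> H"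
  have "(x <# A) \<inter> (y <# A) \<in> H" if xy: "x \<in> carrier G" "y \<in> carrier G" "x \<noteq> y" for x y
  proof -
    define z where "z = inv x \<otimes> y"
    have zc: "z \<in> carrier G" using xy by (simp add: z_def)
    have xz: "x \<otimes> z = y" using xy by (simp add: z_def m_assoc[symmetric])
    have "z \<noteq> \<one>" using xz xy by auto
    hence "A \<inter> (z <# A) \<in> H" using R zc by blast
    hence "x <# (A \<inter> (z <# A)) \<in> H" using H xy(1) unfolding left_inv_lower_def by blast
    moreover have "x <# (A \<inter> (z <# A)) = (x <# A) \<inter> (y <# A)"
      using lcos_Int[OF xy(1) A lcos_sub[OF zc A]] lcos_m_assoc[OF A xy(1) zc] xz by simp
    ultimately show ?thesis by simp
  qed
  thus "A \<in> tau G H" using A unfolding tau_def by blast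
qed

lemma tau_lil:
  assumes H: "left_inv_lower G H"
  shows "left_inv_lower G (tau G H)"
  unfolding left_inv_lower_def
proof (intro conjI ballI allI impI)
  show "tau G H \<subseteq> Pow (carrier G)" unfolding tau_def by auto
next
  fix X g assume X: "X \<in> tau G H" and g: "g \<in> carrier G"
  have Xc: "X \<subseteq> carrier G" using X by (simp add: tau_def)
  have "(x <# (g <# X)) \<inter> (y <# (g <# X)) \<in> H"
    if xy: "x \<in> carrier G" "y \<in> carrier G" "x \<noteq> y" for x y
  proof -
    have "x \<otimes> g \<noteq> y \<otimes> g" using xy g by simp
    hence "((x \<otimes> g) <# X) \<inter> ((y \<otimes> g) <# X) \<in> H" using X xy g unfolding tau_def by simp
    thus ?thesis using lcos_m_assoc[OF Xc xy(1) g] lcos_m_assoc[OF Xc xy(2) g] by simp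
  qed
  thus "g <# X \<in> tau G H" using lcos_sub[OF g Xc] unfolding tau_def by blast
next
  fix X Y assume X: "X \<in> tau G H" and Y: "Y \<subseteq> X"
  have "(x <# Y) \<inter> (y <# Y) \<in> H"
    if xy: "x \<in> carrier G" "y \<in> carrier G" "x \<noteq> y" for x y
  proof -
    have "(x <# X) \<inter> (y <# X) \<in> H" using X xy unfolding tau_def by simp
    moreover have "(x <# Y) \<inter> (y <# Y) \<subseteq> (x <# X) \<inter> (y <# X)" using lcos_mono[OF Y] by blast
    ultimately show ?thesis using H unfolding left_inv_lower_def by blast
  qed
  thus "Y \<in> tau G H" using X Y unfolding tau_def by auto
qed

lemma iter_lil:
  assumes F: "left_inv_lower G F"
  shows "left_inv_lower G (tau_iter G F (\<alpha>::'o::wellorder))"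
proof (induction \<alpha> rule: less_induct)
  case (less \<alpha>)
  show ?case
  proof (cases "\<forall>b. \<not> b < \<alpha>")
    case True thus ?thesis using F by (simp add: tau_iter_zero)
  next
    case False
    have "left_inv_lower G (\<Union>b\<in>{b. b < \<alpha>}. tau_iter G F b)"
      by (rule lil_Union) (rule less.IH, simp)
    hence "left_inv_lower G (tau G (\<Union>b\<in>{b. b < \<alpha>}. tau_iter G F b))" by (rule tau_lil)
    thus ?thesis using False by (simp add: tau_iter_pos)
  qed
qed

lemma main_iff:
  assumes F: "left_inv_lower G F"
  shows "A \<subseteq> carrier G \<Longrightarrow> A \<in> tau_iter G F (\<alpha>::'o::wellorder) \<longleftrightarrow> Nt (tau_tree G F A) \<alpha>"
proof (induction \<alpha> arbitrary: A rule: less_induct)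
  case (less \<alpha>)
  note Ac = less.prems
  show ?case
  proof (cases "\<forall>b. \<not> b < \<alpha>")
    case True
    have "{..<\<alpha>} = {}" using True by auto
    hence fo: "finite_ord \<alpha>" by (simp add: finite_ord_def)
    have "Nt (tau_tree G F A) \<alpha> \<longleftrightarrow> tau_tree G F A = {}"
    proof
      assume "Nt (tau_tree G F A) \<alpha>"
      then obtain d :: "'a list \<Rightarrow> 'o" where "\<forall>s\<in>tau_tree G F A. bnd \<alpha> (d s)"
        unfolding Nt_def by blast
      moreover have "\<not> bnd \<alpha> \<gamma>" for \<gamma> using fo True unfolding bnd_def by simp
      ultimately show "tau_tree G F A = {}" by blast
    next
      assume "tau_tree G F A = {}"
      thus "Nt (tau_tree G F A) \<alpha>" unfolding Nt_def dec_def by simp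
    qed
    also have "\<dots> \<longleftrightarrow> A \<in> F"
    proof
      assume "tau_tree G F A = {}"
      hence "[] \<notin> tau_tree G F A" by simp
      thus "A \<in> F" by (simp add: tau_tree_def shift_set_def)
    next
      assume "A \<in> F"
      have low: "\<And>X Y. X \<in> F \<Longrightarrow> Y \<subseteq> X \<Longrightarrow> Y \<in> F" using F unfolding left_inv_lower_def by blast
      have "shift_set G A s \<in> F" for s by (rule low[OF \<open>A \<in> F\<close> shift_sub])
      thus "tau_tree G F A = {}" by (simp add: tau_tree_def)
    qed
    finally show ?thesis using True by (simp add: tau_iter_zero)
  next
    case False
    hence pos: "\<exists>b. b < \<alpha>" by simp
    let ?U = "\<Union>b\<in>{b. b < \<alpha>}. tau_iter G F b"
    have U: "left_inv_lower G ?U" by (rule lil_Union) (rule iter_lil[OF F])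
    have "A \<in> tau_iter G F \<alpha> \<longleftrightarrow> A \<in> tau G ?U" using pos by (simp add: tau_iter_pos)
    also have "\<dots> \<longleftrightarrow> (\<forall>z\<in>carrier G - {\<one>}. A \<inter> (z <# A) \<in> ?U)" by (rule tau_char[OF U Ac])
    also have "\<dots> \<longleftrightarrow> (\<forall>z\<in>carrier G - {\<one>}. \<exists>\<beta><\<alpha>. Nt {s. z#s \<in> tau_tree G F A} \<beta>)"
    proof -
      have *: "A \<inter> (z <# A) \<in> ?U \<longleftrightarrow> (\<exists>\<beta><\<alpha>. Nt {s. z#s \<in> tau_tree G F A} \<beta>)"
        if z: "z \<in> carrier G - {\<one>}" for z
      proof -
        have sub: "A \<inter> (z <# A) \<subseteq> carrier G" using Ac by blast
        have "A \<inter> (z <# A) \<in> ?U \<longleftrightarrow> (\<exists>\<beta><\<alpha>. A \<inter> (z <# A) \<in> tau_iter G F \<beta>)" by auto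
        also have "\<dots> \<longleftrightarrow> (\<exists>\<beta><\<alpha>. Nt (tau_tree G F (A \<inter> (z <# A))) \<beta>)"
        proof
          assume "\<exists>\<beta><\<alpha>. A \<inter> (z <# A) \<in> tau_iter G F \<beta>"
          then obtain \<beta> where b: "\<beta> < \<alpha>" "A \<inter> (z <# A) \<in> tau_iter G F \<beta>" by blast
          have "Nt (tau_tree G F (A \<inter> (z <# A))) \<beta>" using less.IH[OF b(1) sub] b(2) by simp
          thus "\<exists>\<beta><\<alpha>. Nt (tau_tree G F (A \<inter> (z <# A))) \<beta>" using b(1) by blast
        next
          assume "\<exists>\<beta><\<alpha>. Nt (tau_tree G F (A \<inter> (z <# A))) \<beta>"
          then obtain \<beta> where b: "\<beta> < \<alpha>" "Nt (tau_tree G F (A \<inter> (z <# A))) \<beta>" by blast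
          have "A \<inter> (z <# A) \<in> tau_iter G F \<beta>" using less.IH[OF b(1) sub] b(2) by simp
          thus "\<exists>\<beta><\<alpha>. A \<inter> (z <# A) \<in> tau_iter G F \<beta>" using b(1) by blast
        qed
        finally show ?thesis using tree_sub[OF z] by simp
      qed
      show ?thesis by (rule ball_cong[OF refl]) (rule *, assumption)
    qed
    also have "\<dots> \<longleftrightarrow> Nt (tau_tree G F A) \<alpha>"
      by (rule tree_step[OF tree_Cons tree_prefix[OF F] pos])
    finally show ?thesis .
  qed
qed

end

theorem theorem3p2:
  fixes G (structure) and \<F> :: "'g set set" and A :: "'g set" and \<alpha> :: "'o::wellorder"
  assumes "group G" and "left_inv_lower G \<F>" and "A \<subseteq> carrier G"
  shows "A \<in> tau_iter G \<F> \<alpha> \<longleftrightarrow>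
           wf_poset (tau_tree G \<F> A) \<and>
           (if finite_ord \<alpha> then tree_rank_le (tau_tree G \<F> A) \<alpha>
            else tree_rank_le_succ (tau_tree G \<F> A) \<alpha>)"
proof -
  have "A \<in> tau_iter G \<F> \<alpha> \<longleftrightarrow> Nt (tau_tree G \<F> A) \<alpha>"
    by (rule group.main_iff[OF assms(1) assms(2) assms(3)])
  also have "\<dots> \<longleftrightarrow> wf_poset (tau_tree G \<F> A) \<and>
           (if finite_ord \<alpha> then tree_rank_le (tau_tree G \<F> A) \<alpha>
            else tree_rank_le_succ (tau_tree G \<F> A) \<alpha>)"
    by (rule rank_iff_Nt[symmetric])
  finally show ?thesis .
qed

end
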